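(* Suppose $s>1/2$ and $g\in H^s(\mathbb U)$. Then there exists a constant $C_s>0$ such that for all $N,M\ge1$, $$\|\mathcal I_N\mathcal M(g)\mathcal C^+-\mathcal I_N\mathcal M(\mathcal P_Mg)\mathcal C^+\|_s\le C_s\|g-\mathcal P_Mg\|_s,\qquad\|\mathcal P_N\mathcal M(g)\mathcal C^+-\mathcal P_N\mathcal M(\mathcal P_Mg)\mathcal C^+\|_s\le C_s\|g-\mathcal P_Mg\|_s.$$
   Context: $\mathbb U=\{|z|=1\}$. For $u\in L^2(\mathbb U)$, $u(z)=\sum_ju_jz^j$; $H^s(\mathbb U)$ has norm $\|u\|_s^2=c_{|s|}\sum_j|u_j|^2\max\{1,|j|\}^{2s}$ with fixed constants $c_{|s|}>0$ chosen so that $\|uv\|_s\le\|u\|_s\|v\|_s$ for $s>1/2$; $\|\cdot\|_s$ also denotes the operator norm on $H^s(\mathbb U)$. $\mathcal M(g)u=gu$. $\mathcal C^+u=\sum_{j\ge0}u_jz^j$ (boundary value from inside of the Cauchy integral). For $N\ge1$, $N_-=\lfloor N/2\rfloor$, $N_+=\lfloor(N-1)/2\rfloor$, $\mathcal P_Nu=\sum_{j=-N_-}^{N_+}u_jz^j$, and $\mathcal I_Nu=\sum_{j=-N_-}^{N_+}\check u_jz^j$ is the trigonometric interpolant at the nodes $e^{2\pi i(\ell-1)/N}$, $\ell=1,\dots,N$, i.e. $\check u_j=\sum_{p\in\mathbb Z}u_{pN+j}$. *)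

theory Defs
  imports "HOL-Analysis.Analysis"
begin

text \<open>Functions on the unit circle are represented by their Fourier coefficient
  sequences: u(z) = sum_j u_j z^j corresponds to u :: int => complex.\<close>

type_synonym fcoeff = "int \<Rightarrow> complex"

definition sob_weight :: "real \<Rightarrow> int \<Rightarrow> real" where
  "sob_weight s j = (max 1 (real_of_int \<bar>j\<bar>)) powr (2 * s)"

definition in_Hs :: "real \<Rightarrow> fcoeff \<Rightarrow> bool" where
  "in_Hs s u \<longleftrightarrow> (\<lambda>j. (norm (u j))\<^sup>2 * sob_weight s j) summable_on UNIV"

text \<open>The H^s norm, with the normalising constants c(|s|) given as a parameter c.\<close>
definition Hnorm :: "(real \<Rightarrow> real) \<Rightarrow> real \<Rightarrow> fcoeff \<Rightarrow> real" where
  "Hnorm c s u = sqrt (c \<bar>s\<bar> * (\<Sum>\<^sub>\<infinity>j. (norm (u j))\<^sup>2 * sob_weight s j))"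

text \<open>Multiplication operator M(g): pointwise product of functions, i.e.
  convolution of Fourier coefficients.\<close>
definition mult_op :: "fcoeff \<Rightarrow> fcoeff \<Rightarrow> fcoeff" where
  "mult_op g u = (\<lambda>j. \<Sum>\<^sub>\<infinity>k. g k * u (j - k))"

definition Cplus :: "fcoeff \<Rightarrow> fcoeff" where
  "Cplus u = (\<lambda>j. if 0 \<le> j then u j else 0)"

definition Nminus :: "nat \<Rightarrow> int" where
  "Nminus N = int N div 2"

definition Nplus :: "nat \<Rightarrow> int" where
  "Nplus N = (int N - 1) div 2"

definition PN :: "nat \<Rightarrow> fcoeff \<Rightarrow> fcoeff" where
  "PN N u = (\<lambda>j. if - Nminus N \<le> j \<and> j \<le> Nplus N then u j else 0)"

text \<open>Trigonometric interpolant I_N, with aliased coefficients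
  check-u_j = sum_p u_{pN+j}.\<close>
definition IN :: "nat \<Rightarrow> fcoeff \<Rightarrow> fcoeff" where
  "IN N u = (\<lambda>j. if - Nminus N \<le> j \<and> j \<le> Nplus N
                  then (\<Sum>\<^sub>\<infinity>p::int. u (p * int N + j)) else 0)"

end

theory Submission
  imports Defs
begin


definition Ssum :: "real \<Rightarrow> fcoeff \<Rightarrow> real" where
  "Ssum s u = (\<Sum>\<^sub>\<infinity>j. (norm (u j))\<^sup>2 * sob_weight s j)"

lemma Hnorm_S: "Hnorm c s u = sqrt (c \<bar>s\<bar> * Ssum s u)"
  by (simp add: Hnorm_def Ssum_def)

lemma sw_ge1: "s \<ge> 0 \<Longrightarrow> sob_weight s j \<ge> 1"
  unfolding sob_weight_def by (intro ge_one_powr_ge_zero) auto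

lemma sw_pos: "s \<ge> 0 \<Longrightarrow> sob_weight s j > 0"
  using sw_ge1[of s j] by linarith

lemma sw_nonneg[simp]: "sob_weight s j \<ge> 0"
  unfolding sob_weight_def by simp

lemma Ssum_nonneg: "Ssum s u \<ge> 0"
  unfolding Ssum_def by (rule infsum_nonneg) (simp add: sob_weight_def)

lemma infsum_diff':
  fixes f g :: "'a \<Rightarrow> 'b::{topological_ab_group_add, t2_space}"
  assumes "f summable_on A" "g summable_on A"
  shows "infsum (\<lambda>x. f x - g x) A = infsum f A - infsum g A"
proof -
  have "((\<lambda>x. f x + (- g x)) has_sum (infsum f A + (- infsum g A))) A"
  proof (rule has_sum_add)
    show "(f has_sum infsum f A) A" by (rule has_sum_infsum[OF assms(1)])
    show "((\<lambda>x. - g x) has_sum - infsum g A) A"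
      by (rule has_sum_uminus[THEN iffD2]) (simp add: has_sum_infsum[OF assms(2)])
  qed
  then show ?thesis by (simp add: infsumI)
qed

lemma inv_sw_summable:
  assumes "s > 1/2"
  shows "(\<lambda>j::int. 1 / sob_weight s j) summable_on UNIV"
proof -
  define f where "f j = 1 / sob_weight s j" for j :: int
  have fn: "f j \<ge> 0" for j using sw_pos[of s j] assms unfolding f_def by simp
  have sn: "summable (\<lambda>n::nat. real n powr (- 2 * s))"
    using summable_real_powr_iff assms by simp
  have sn2: "summable (\<lambda>n::nat. f (int n))"
  proof (rule summable_cong[THEN iffD2, OF _ sn])
    show "\<forall>\<^sub>F n in sequentially. f (int n) = real n powr (- 2 * s)"
      using eventually_ge_at_top[of "1::nat"]
    proof eventually_elim
      case (elim n)
      then have "max 1 (real_of_int \<bar>int n\<bar>) = real n" by simp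
      then show ?case unfolding f_def sob_weight_def
        by (simp add: powr_minus_divide)
    qed
  qed
  have sn3: "summable (\<lambda>n::nat. f (- int n))"
    using sn2 unfolding f_def sob_weight_def by simp
  have a: "f summable_on (int ` UNIV)"
    by (subst summable_on_reindex) (use sn2 fn in \<open>auto simp: o_def summable_on_UNIV_nonneg_real_iff\<close>)
  have b: "f summable_on ((\<lambda>n. - int n) ` UNIV)"
    by (subst summable_on_reindex) (use sn3 fn in \<open>auto simp: o_def summable_on_UNIV_nonneg_real_iff inj_on_def\<close>)
  have "UNIV = int ` UNIV \<union> (\<lambda>n. - int n) ` UNIV"
  proof -
    have "x \<in> int ` UNIV \<union> (\<lambda>n. - int n) ` UNIV" for x :: int
    proof (cases "x \<ge> 0")
      case True then show ?thesis by (auto intro!: image_eqI[of x int "nat x"])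
    next
      case False then show ?thesis by (auto intro!: image_eqI[of x _ "nat (-x)"])
    qed
    then show ?thesis by auto
  qed
  then have "f summable_on UNIV" using summable_on_union[OF a b] by simp
  then show ?thesis unfolding f_def .
qed

lemma Hs_mono:
  assumes "s \<ge> 0" "in_Hs s u" "\<And>j. norm (v j) \<le> norm (u j)"
  shows "in_Hs s v \<and> Ssum s v \<le> Ssum s u"
proof -
  have le: "(norm (v j))\<^sup>2 * sob_weight s j \<le> (norm (u j))\<^sup>2 * sob_weight s j" for j
    using sw_pos[OF assms(1), of j] assms(3)[of j]
    by (intro mult_right_mono power_mono) auto
  have sv: "in_Hs s v" unfolding in_Hs_def
    by (rule summable_on_comparison_test[OF assms(2)[unfolded in_Hs_def]])
       (use le in auto)
  moreover have "Ssum s v \<le> Ssum s u" unfolding Ssum_def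
    by (rule infsum_mono[OF sv[unfolded in_Hs_def] assms(2)[unfolded in_Hs_def]]) (use le in auto)
  ultimately show ?thesis by simp
qed

lemma Hs_finite:
  assumes "finite F" "\<And>j. j \<notin> F \<Longrightarrow> v j = 0"
  shows "in_Hs s v \<and> Ssum s v = (\<Sum>j\<in>F. (norm (v j))\<^sup>2 * sob_weight s j)"
proof -
  have "(\<lambda>j. (norm (v j))\<^sup>2 * sob_weight s j) summable_on UNIV \<longleftrightarrow>
        (\<lambda>j. (norm (v j))\<^sup>2 * sob_weight s j) summable_on F"
    by (rule summable_on_cong_neutral) (use assms in auto)
  moreover have "Ssum s v = infsum (\<lambda>j. (norm (v j))\<^sup>2 * sob_weight s j) F"
    unfolding Ssum_def by (rule infsum_cong_neutral) (use assms in auto)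
  ultimately show ?thesis using assms(1) by (simp add: in_Hs_def)
qed

lemma term_le_Ssum:
  assumes "s \<ge> 0" "in_Hs s u"
  shows "(norm (u j))\<^sup>2 \<le> Ssum s u"
proof -
  have "(norm (u j))\<^sup>2 \<le> (norm (u j))\<^sup>2 * sob_weight s j"
    using sw_ge1[OF assms(1), of j] by (simp add: mult_le_cancel_left1)
  also have "\<dots> = infsum (\<lambda>j. (norm (u j))\<^sup>2 * sob_weight s j) {j}" by simp
  also have "\<dots> \<le> Ssum s u" unfolding Ssum_def
    by (rule infsum_mono_neutral) (use assms sw_pos[OF assms(1)] in \<open>auto simp: in_Hs_def\<close>)
  finally show ?thesis .
qed

lemma amgm: fixes a t :: real assumes "t > 0" shows "2 * a \<le> t * a\<^sup>2 + 1 / t"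
proof -
  have "0 \<le> (t * a - 1)\<^sup>2 / t" using assms by simp
  also have "(t * a - 1)\<^sup>2 / t = t * a\<^sup>2 + 1 / t - 2 * a"
    using assms by (simp add: field_simps power2_eq_square)
  finally show ?thesis by simp
qed

lemma Hs_l1:
  assumes "s > 1/2" "in_Hs s u"
  shows "(\<lambda>j. norm (u j)) summable_on UNIV"
proof (rule summable_on_comparison_test)
  show "(\<lambda>j. (norm (u j))\<^sup>2 * sob_weight s j + 1 / sob_weight s j) summable_on UNIV"
    using assms inv_sw_summable[OF assms(1)] unfolding in_Hs_def
    by (intro summable_on_add) auto
  fix j
  have "2 * norm (u j) \<le> sob_weight s j * (norm (u j))\<^sup>2 + 1 / sob_weight s j"
    by (rule amgm) (use sw_pos assms in auto)
  then show "norm (u j) \<le> (norm (u j))\<^sup>2 * sob_weight s j + 1 / sob_weight s j"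
    using sw_pos[of s j] assms by (smt (verit) mult.commute norm_ge_zero)
qed simp

lemma cs_bound:
  fixes a W :: "'a \<Rightarrow> real"
  assumes X: "(\<lambda>x. (a x)\<^sup>2 * W x) summable_on A" and Y: "(\<lambda>x. 1 / W x) summable_on A"
    and a0: "\<And>x. a x \<ge> 0" and W0: "\<And>x. W x > 0"
    and Ypos: "infsum (\<lambda>x. 1 / W x) A > 0"
  shows "a summable_on A \<and> (infsum a A)\<^sup>2 \<le> infsum (\<lambda>x. (a x)\<^sup>2 * W x) A * infsum (\<lambda>x. 1 / W x) A"
proof -
  define Xs Ys where "Xs = infsum (\<lambda>x. (a x)\<^sup>2 * W x) A" and "Ys = infsum (\<lambda>x. 1 / W x) A"
  have Xs0: "Xs \<ge> 0" unfolding Xs_def by (rule infsum_nonneg) (use W0 in \<open>auto intro!: mult_nonneg_nonneg simp: less_imp_le\<close>)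
  have key: "2 * a x \<le> e * ((a x)\<^sup>2 * W x) + (1/e) * (1 / W x)" if "e > 0" for e x
    using amgm[of "e * W x" "a x"] that W0[of x] by (simp add: algebra_simps)
  have sa: "a summable_on A"
  proof (rule summable_on_comparison_test)
    show "(\<lambda>x. (a x)\<^sup>2 * W x + 1 / W x) summable_on A" using X Y by (rule summable_on_add)
    fix x show "a x \<le> (a x)\<^sup>2 * W x + 1 / W x" using key[of 1 x] a0[of x] by simp
  qed (use a0 in auto)
  have bnd: "2 * infsum a A \<le> e * Xs + (1/e) * Ys" if "e > 0" for e
  proof -
    have s1: "(\<lambda>x. e * ((a x)\<^sup>2 * W x) + (1/e) * (1 / W x)) summable_on A"
      by (intro summable_on_add summable_on_cmult_right X Y)
    have s2: "(\<lambda>x. 2 * a x) summable_on A" by (intro summable_on_cmult_right sa)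
    have "infsum (\<lambda>x. 2 * a x) A \<le> infsum (\<lambda>x. e * ((a x)\<^sup>2 * W x) + (1/e) * (1 / W x)) A"
      by (rule infsum_mono[OF s2 s1]) (use key[OF that] in blast)
    also have "\<dots> = e * Xs + (1/e) * Ys"
      unfolding Xs_def Ys_def
      by (subst infsum_add) (use X Y in \<open>auto intro!: summable_on_cmult_right simp only: infsum_cmult_right\<close>)
    finally show ?thesis by (simp add: infsum_cmult_right sa)
  qed
  have "(infsum a A)\<^sup>2 \<le> (Xs + d) * Ys" if "d > 0" for d
  proof -
    have XP: "Xs + d > 0" using Xs0 that by simp
    have Yp: "Ys > 0" using Ypos Ys_def by simp
    define sP sY where "sP = sqrt (Xs + d)" and "sY = sqrt Ys"
    have sPp: "sP > 0" "sP * sP = Xs + d" unfolding sP_def using XP by auto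
    have sYp: "sY > 0" "sY * sY = Ys" unfolding sY_def using Yp by auto
    define e where "e = sY / sP"
    have ep: "e > 0" unfolding e_def using sPp sYp by simp
    have "e * Xs + (1/e) * Ys \<le> e * (Xs + d) + (1/e) * Ys" using ep that by simp
    also have "e * (Xs + d) + (1/e) * Ys = 2 * (sY * sP)"
      unfolding e_def sPp(2)[symmetric] sYp(2)[symmetric] using sPp(1) sYp(1)
      by (simp add: field_simps)
    finally have "infsum a A \<le> sY * sP" using bnd[OF ep] by simp
    moreover have "infsum a A \<ge> 0" using a0 by (simp add: infsum_nonneg)
    ultimately have "(infsum a A)\<^sup>2 \<le> (sY * sP)\<^sup>2" by (rule power_mono)
    also have "(sY * sP)\<^sup>2 = (Xs + d) * Ys"
      using sPp(2) sYp(2) by (simp add: power2_eq_square algebra_simps)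
    finally show ?thesis .
  qed
  then have "(infsum a A)\<^sup>2 \<le> Xs * Ys"
  proof -
    assume h: "\<And>d. d > 0 \<Longrightarrow> (infsum a A)\<^sup>2 \<le> (Xs + d) * Ys"
    have Yp: "Ys > 0" using Ypos Ys_def by simp
    show ?thesis
    proof (rule ccontr)
      assume "\<not> ?thesis"
      then have gt: "(infsum a A)\<^sup>2 - Xs * Ys > 0" by simp
      define d where "d = ((infsum a A)\<^sup>2 - Xs * Ys) / (2 * Ys)"
      have dp: "d > 0" unfolding d_def using gt Yp by simp
      have "(Xs + d) * Ys = Xs * Ys + ((infsum a A)\<^sup>2 - Xs * Ys) / 2"
        unfolding d_def using Yp by (simp add: field_simps)
      then have "(infsum a A)\<^sup>2 \<le> Xs * Ys + ((infsum a A)\<^sup>2 - Xs * Ys) / 2"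
        using h[OF dp] by simp
      moreover have "\<And>q r::real. q \<le> r + (q - r) / 2 \<Longrightarrow> 0 < q - r \<Longrightarrow> False" by (simp add: field_simps)
      ultimately show False using gt by blast
    qed
  qed
  then show ?thesis using sa Xs_def Ys_def by simp
qed

lemma R_bounds:
  assumes "- Nminus N \<le> j" "j \<le> Nplus N"
  shows "2 * \<bar>j\<bar> \<le> int N"
  using assms unfolding Nminus_def Nplus_def by linarith

lemma alias_int:
  fixes p j :: int
  assumes "N \<ge> 1" "2 * \<bar>j\<bar> \<le> int N"
  shows "max 1 \<bar>p\<bar> * max 1 \<bar>j\<bar> \<le> 2 * max 1 \<bar>p * int N + j\<bar>"
proof (cases "p = 0")
  case True then show ?thesis by (simp add: max_def)
next
  case False
  then have p1: "\<bar>p\<bar> \<ge> 1" by simp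
  have mj: "max 1 \<bar>j\<bar> \<le> int N" using assms by linarith
  have a: "\<bar>p * int N\<bar> = \<bar>p\<bar> * int N" by (simp add: abs_mult)
  have b: "\<bar>p\<bar> * int N \<ge> int N" using p1 assms by (simp add: mult_le_cancel_right1)
  have c: "\<bar>p\<bar> * max 1 \<bar>j\<bar> \<le> \<bar>p\<bar> * int N" using mj p1 by (intro mult_left_mono) auto
  have d: "\<bar>p * int N + j\<bar> \<ge> \<bar>p * int N\<bar> - \<bar>j\<bar>" by linarith
  have e: "max 1 \<bar>p\<bar> = \<bar>p\<bar>" using p1 by simp
  have f: "max 1 \<bar>p * int N + j\<bar> \<ge> \<bar>p * int N + j\<bar>" by simp
  show ?thesis unfolding e using a b c d f assms(2) by linarith
qed

lemma alias_weight:
  assumes "s \<ge> 0" "N \<ge> 1" "2 * \<bar>j\<bar> \<le> int N"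
  shows "1 / sob_weight s (p * int N + j) \<le> 2 powr (2 * s) / sob_weight s j * (1 / sob_weight s p)"
proof -
  let ?mp = "max 1 (real_of_int \<bar>p\<bar>)" and ?mj = "max 1 (real_of_int \<bar>j\<bar>)"
    and ?mk = "max 1 (real_of_int \<bar>p * int N + j\<bar>)"
  have "real_of_int (max 1 \<bar>p\<bar> * max 1 \<bar>j\<bar>) \<le> real_of_int (2 * max 1 \<bar>p * int N + j\<bar>)"
    using alias_int[OF assms(2,3), of p] by linarith
  then have ineq: "?mp * ?mj / 2 \<le> ?mk" by (simp add: of_int_max)
  have pos: "?mp * ?mj / 2 > 0" by (intro divide_pos_pos mult_pos_pos) auto
  have "(?mp * ?mj / 2) powr (2 * s) \<le> ?mk powr (2 * s)"
    by (rule powr_mono2) (use assms ineq pos in auto)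
  also have "(?mp * ?mj / 2) powr (2 * s) = sob_weight s p * sob_weight s j / 2 powr (2 * s)"
    unfolding sob_weight_def by (simp add: powr_mult powr_divide)
  finally have le: "sob_weight s p * sob_weight s j / 2 powr (2 * s) \<le> sob_weight s (p * int N + j)"
    unfolding sob_weight_def .
  have pp: "sob_weight s p > 0" "sob_weight s j > 0" using sw_pos assms by auto
  have pq: "sob_weight s p * sob_weight s j / 2 powr (2 * s) > 0" using pp by simp
  have "1 / sob_weight s (p * int N + j) \<le> 1 / (sob_weight s p * sob_weight s j / 2 powr (2 * s))"
    using divide_left_mono[OF le _ mult_pos_pos[OF sw_pos[OF assms(1), of "p * int N + j"] pq], of 1] by simp
  also have "\<dots> = 2 powr (2 * s) / sob_weight s j * (1 / sob_weight s p)" by simp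
  finally show ?thesis .
qed

lemma IN_bound:
  assumes s: "s > 1/2" and N: "N \<ge> 1" and v: "in_Hs s v"
  shows "Ssum s (IN N v) \<le> 2 powr (2 * s) * infsum (\<lambda>j. 1 / sob_weight s j) UNIV * Ssum s v"
proof -
  define Z where "Z = infsum (\<lambda>j::int. 1 / sob_weight s j) UNIV"
  define f where "f k = (norm (v k))\<^sup>2 * sob_weight s k" for k
  define R where "R = {- Nminus N .. Nplus N}"
  define B where "B j = range (\<lambda>p::int. p * int N + j)" for j
  define X where "X j = infsum (\<lambda>p. f (p * int N + j)) UNIV" for j
  have s0: "s \<ge> 0" using s by simp
  have fs: "f summable_on UNIV" using v unfolding in_Hs_def f_def .
  have f0: "f k \<ge> 0" for k unfolding f_def by simp
  have inj: "inj (\<lambda>p::int. p * int N + j)" for j using N by (auto simp: inj_on_def)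
  have fsB: "f summable_on B j" for j
    using summable_on_subset[OF fs, of "B j"] by simp
  have fsB': "(\<lambda>p. f (p * int N + j)) summable_on UNIV" for j
    using fsB[of j] summable_on_reindex[OF inj[of j], of f] unfolding B_def by (simp add: o_def)
  have XB: "X j = infsum f (B j)" for j
    unfolding X_def B_def using infsum_reindex[OF inj[of j], of f] by (simp add: o_def)
  have Zs: "(\<lambda>j::int. 1 / sob_weight s j) summable_on UNIV" by (rule inv_sw_summable[OF s])
  have Z0: "Z \<ge> 0" unfolding Z_def by (rule infsum_nonneg) simp
  have per: "(norm (IN N v j))\<^sup>2 * sob_weight s j \<le> 2 powr (2 * s) * Z * X j" if jR: "j \<in> R" for j
  proof -
    have j2: "2 * \<bar>j\<bar> \<le> int N" using jR R_bounds unfolding R_def by auto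
    have INj: "IN N v j = infsum (\<lambda>p. v (p * int N + j)) UNIV" using jR unfolding IN_def R_def by auto
    define a where "a p = norm (v (p * int N + j))" for p
    define W where "W p = sob_weight s (p * int N + j)" for p
    have W0: "W p > 0" for p unfolding W_def using sw_pos s0 by auto
    have Xs: "(\<lambda>p. (a p)\<^sup>2 * W p) summable_on UNIV" using fsB'[of j] unfolding a_def W_def f_def .
    have Xe: "infsum (\<lambda>p. (a p)\<^sup>2 * W p) UNIV = X j" unfolding X_def a_def W_def f_def ..
    have cmpW: "1 / W p \<le> 2 powr (2 * s) / sob_weight s j * (1 / sob_weight s p)" for p
      unfolding W_def by (rule alias_weight[OF s0 N j2])
    have Ys: "(\<lambda>p. 1 / W p) summable_on UNIV"
    proof (rule summable_on_comparison_test[OF summable_on_cmult_right[OF Zs, of "2 powr (2 * s) / sob_weight s j"]])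
      fix p show "1 / W p \<le> 2 powr (2 * s) / sob_weight s j * (1 / sob_weight s p)" by (rule cmpW)
      show "0 \<le> 1 / W p" using W0[of p] by simp
    qed
    have "0 < 1 / W 0" using W0 by simp
    also have "1 / W 0 = infsum (\<lambda>p. 1 / W p) {0}" by simp
    also have "\<dots> \<le> infsum (\<lambda>p. 1 / W p) UNIV"
      by (rule infsum_mono_neutral) (use Ys W0 in \<open>auto intro: less_imp_le\<close>)
    finally have Ypos: "infsum (\<lambda>p. 1 / W p) UNIV > 0" .
    have Yle: "infsum (\<lambda>p. 1 / W p) UNIV \<le> 2 powr (2 * s) / sob_weight s j * Z"
    proof -
      have "infsum (\<lambda>p. 1 / W p) UNIV \<le> infsum (\<lambda>p. 2 powr (2 * s) / sob_weight s j * (1 / sob_weight s p)) UNIV"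
        by (rule infsum_mono[OF Ys summable_on_cmult_right[OF Zs]]) (rule cmpW)
      also have "\<dots> = 2 powr (2 * s) / sob_weight s j * Z" unfolding Z_def by (rule infsum_cmult_right')
      finally show ?thesis .
    qed
    have a0: "a p \<ge> 0" for p unfolding a_def by simp
    have cs: "a summable_on UNIV \<and> (infsum a UNIV)\<^sup>2 \<le> X j * infsum (\<lambda>p. 1 / W p) UNIV"
      using cs_bound[OF Xs Ys a0 W0 Ypos] unfolding Xe .
    have X0: "X j \<ge> 0" unfolding X_def by (rule infsum_nonneg) (simp add: f0)
    have "norm (IN N v j) \<le> infsum a UNIV" unfolding INj a_def
    proof (rule norm_infsum_bound)
      show "(\<lambda>p. norm (v (p * int N + j))) summable_on UNIV" using cs unfolding a_def by simp
    qed
    then have "(norm (IN N v j))\<^sup>2 \<le> (infsum a UNIV)\<^sup>2" by (intro power_mono) auto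
    also have "\<dots> \<le> X j * infsum (\<lambda>p. 1 / W p) UNIV" using cs by simp
    also have "\<dots> \<le> X j * (2 powr (2 * s) / sob_weight s j * Z)"
      by (rule mult_left_mono[OF Yle X0])
    finally have "(norm (IN N v j))\<^sup>2 * sob_weight s j \<le> X j * (2 powr (2 * s) / sob_weight s j * Z) * sob_weight s j"
      by (rule mult_right_mono) simp
    also have "\<dots> = 2 powr (2 * s) * Z * X j" using sw_pos[OF s0, of j] by (simp add: field_simps)
    finally show ?thesis .
  qed
  have fin: "finite R" unfolding R_def by simp
  have Rdisj: "B j \<inter> B j' = {}" if "j \<in> R" "j' \<in> R" "j \<noteq> j'" for j j'
  proof (rule ccontr)
    assume "B j \<inter> B j' \<noteq> {}"
    then obtain p p' where e: "p * int N + j = p' * int N + j'" unfolding B_def by auto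
    have d: "\<bar>j' - j\<bar> < int N" using that unfolding R_def Nminus_def Nplus_def by auto
    have e2: "j' - j = (p - p') * int N" using e by (simp add: algebra_simps)
    show False
    proof (cases "p = p'")
      case True then show False using e2 that(3) by simp
    next
      case False
      then have "\<bar>p - p'\<bar> \<ge> 1" by simp
      then have "\<bar>p - p'\<bar> * int N \<ge> int N" by (simp add: mult_le_cancel_right1)
      then show False using d e2 by (simp add: abs_mult)
    qed
  qed
  have hs: "(f has_sum (\<Sum>j\<in>R. X j)) (\<Union>j\<in>R. B j)"
    by (rule sum_has_sum[OF fin]) (use XB fsB Rdisj in \<open>auto intro: has_sum_infsum\<close>)
  have sumX: "(\<Sum>j\<in>R. X j) \<le> Ssum s v"
  proof -
    have "(\<Sum>j\<in>R. X j) = infsum f (\<Union>j\<in>R. B j)" using hs by (simp add: infsumI)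
    also have "\<dots> \<le> infsum f UNIV"
      by (rule infsum_mono_neutral) (use hs fs f0 in \<open>auto simp: summable_on_def\<close>)
    finally show ?thesis unfolding Ssum_def f_def .
  qed
  have "Ssum s (IN N v) = (\<Sum>j\<in>R. (norm (IN N v j))\<^sup>2 * sob_weight s j)"
    by (rule conjunct2[OF Hs_finite[OF fin]]) (auto simp: IN_def R_def)
  also have "\<dots> \<le> (\<Sum>j\<in>R. 2 powr (2 * s) * Z * X j)" by (rule sum_mono) (rule per)
  also have "\<dots> = 2 powr (2 * s) * Z * (\<Sum>j\<in>R. X j)" by (simp add: sum_distrib_left)
  also have "\<dots> \<le> 2 powr (2 * s) * Z * Ssum s v" by (rule mult_left_mono[OF sumX]) (use Z0 in simp)
  finally show ?thesis unfolding Z_def .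
qed



lemma norm_le_sqrtS:
  assumes "s \<ge> 0" "in_Hs s u"
  shows "norm (u j) \<le> sqrt (Ssum s u)"
  using term_le_Ssum[OF assms, of j] by (simp add: real_le_rsqrt)

lemma conv_summable:
  assumes s: "s > 1/2" and h: "in_Hs s h" and w: "in_Hs s w"
  shows "(\<lambda>k. h k * w (j - k)) summable_on UNIV"
proof (rule abs_summable_summable)
  define b where "b = sqrt (Ssum s w)"
  have "(\<lambda>k. norm (h k) * b) summable_on UNIV"
    by (rule summable_on_cmult_left[OF Hs_l1[OF s h]])
  then show "(\<lambda>k. norm (h k * w (j - k))) summable_on UNIV"
  proof (rule summable_on_comparison_test)
    fix k
    have "norm (w (j - k)) \<le> b" unfolding b_def by (rule norm_le_sqrtS) (use s w in auto)
    then show "norm (h k * w (j - k)) \<le> norm (h k) * b"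
      by (simp add: norm_mult mult_left_mono)
  qed simp
qed

lemma PN_zero: "\<bar>j\<bar> > int K \<Longrightarrow> PN K u j = 0"
  unfolding PN_def Nminus_def Nplus_def by auto

lemma filterlim_A:
  fixes j :: int
  shows "filterlim (\<lambda>K. {k. (- Nminus K \<le> k \<and> k \<le> Nplus K) \<and> (- Nminus K \<le> j - k \<and> j - k \<le> Nplus K)})
           (finite_subsets_at_top UNIV) sequentially"
  unfolding filterlim_def le_filter_def eventually_filtermap
proof (intro allI impI)
  fix P assume "eventually P (finite_subsets_at_top (UNIV :: int set))"
  then obtain X where X: "finite X" "\<And>Y. finite Y \<Longrightarrow> X \<subseteq> Y \<Longrightarrow> P Y"
    unfolding eventually_finite_subsets_at_top by auto
  define R where "R = (\<Sum>k\<in>X. \<bar>k\<bar>)"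
  have R: "\<bar>k\<bar> \<le> R" if "k \<in> X" for k
    unfolding R_def by (rule member_le_sum[OF that]) (use X(1) in auto)
  show "eventually (\<lambda>K. P {k. (- Nminus K \<le> k \<and> k \<le> Nplus K) \<and> (- Nminus K \<le> j - k \<and> j - k \<le> Nplus K)}) sequentially"
    unfolding eventually_sequentially
  proof (intro exI allI impI)
    fix K assume K: "K \<ge> nat (2 * (R + \<bar>j\<bar>) + 2)"
    then have K': "int K \<ge> 2 * (R + \<bar>j\<bar>) + 2" by linarith
    have fin: "finite {k. (- Nminus K \<le> k \<and> k \<le> Nplus K) \<and> (- Nminus K \<le> j - k \<and> j - k \<le> Nplus K)}"
      by (rule finite_subset[of _ "{- Nminus K .. Nplus K}"]) auto
    have "X \<subseteq> {k. (- Nminus K \<le> k \<and> k \<le> Nplus K) \<and> (- Nminus K \<le> j - k \<and> j - k \<le> Nplus K)}"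
    proof
      fix k assume "k \<in> X"
      then have kR: "\<bar>k\<bar> \<le> R" by (rule R)
      have a: "Nminus K \<ge> R + \<bar>j\<bar>" "Nplus K \<ge> R + \<bar>j\<bar>"
        using K' unfolding Nminus_def Nplus_def by simp_all
      show "k \<in> {k. (- Nminus K \<le> k \<and> k \<le> Nplus K) \<and> (- Nminus K \<le> j - k \<and> j - k \<le> Nplus K)}"
      proof -
        have "j \<le> \<bar>j\<bar>" "- j \<le> \<bar>j\<bar>" "k \<le> \<bar>k\<bar>" "- k \<le> \<bar>k\<bar>" by auto
        then show ?thesis using a kR by simp
      qed
    qed
    then show "P {k. (- Nminus K \<le> k \<and> k \<le> Nplus K) \<and> (- Nminus K \<le> j - k \<and> j - k \<le> Nplus K)}"
      using X(2) fin by blast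
  qed
qed

lemma vK_conv:
  assumes s: "s > 1/2" and h: "in_Hs s h" and w: "in_Hs s w"
  shows "(\<lambda>K. mult_op (PN K h) (PN K w) j) \<longlonglongrightarrow> mult_op h w j"
proof -
  define f where "f k = h k * w (j - k)" for k
  define A where "A K = {k. (- Nminus K \<le> k \<and> k \<le> Nplus K) \<and> (- Nminus K \<le> j - k \<and> j - k \<le> Nplus K)}" for K
  have finA: "finite (A K)" for K
    unfolding A_def by (rule finite_subset[of _ "{- Nminus K .. Nplus K}"]) auto
  have eq: "mult_op (PN K h) (PN K w) j = sum f (A K)" for K
  proof -
    have "mult_op (PN K h) (PN K w) j = infsum f (A K)"
      unfolding mult_op_def by (rule infsum_cong_neutral) (auto simp: A_def PN_def f_def)
    then show ?thesis using finA by simp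
  qed
  have hs: "(f has_sum mult_op h w j) UNIV"
    unfolding mult_op_def f_def using conv_summable[OF s h w, of j] by (rule has_sum_infsum)
  then have "(sum f \<longlongrightarrow> mult_op h w j) (finite_subsets_at_top UNIV)" unfolding has_sum_def .
  from filterlim_compose[OF this filterlim_A[of j]]
  show ?thesis unfolding eq A_def .
qed


lemma Hnorm_nonneg: "c \<bar>s\<bar> \<ge> 0 \<Longrightarrow> Hnorm c s u \<ge> 0"
  unfolding Hnorm_S using Ssum_nonneg[of s u] by simp

lemma prod_Hs:
  assumes c_pos: "\<forall>t\<ge>0. c t > 0"
    and c_alg: "\<forall>t>1/2. \<forall>u v. in_Hs t u \<longrightarrow> in_Hs t v \<longrightarrow>
                   Hnorm c t (mult_op u v) \<le> Hnorm c t u * Hnorm c t v"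
    and s: "s > 1/2" and h: "in_Hs s h" and w: "in_Hs s w"
  shows "in_Hs s (mult_op h w) \<and> c s * Ssum s (mult_op h w) \<le> (Hnorm c s h * Hnorm c s w)\<^sup>2"
proof -
  have s0: "s \<ge> 0" using s by simp
  have as: "\<bar>s\<bar> = s" using s by simp
  have cs: "c s > 0" using c_pos s0 by simp
  have cs': "c \<bar>s\<bar> \<ge> 0" using cs as by simp
  define v where "v = mult_op h w"
  define vK where "vK K = mult_op (PN K h) (PN K w)" for K
  define Q where "Q = (Hnorm c s h * Hnorm c s w)\<^sup>2"
  have PNm: "in_Hs s (PN K u) \<and> Ssum s (PN K u) \<le> Ssum s u" if "in_Hs s u" for K u
    by (rule Hs_mono[OF s0 that]) (simp add: PN_def)
  have Hmono: "Hnorm c s (PN K u) \<le> Hnorm c s u" if "in_Hs s u" for K u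
  proof -
    have "c s * Ssum s (PN K u) \<le> c s * Ssum s u"
      using PNm[OF that, of K] cs by (intro mult_left_mono) auto
    then have "sqrt (c s * Ssum s (PN K u)) \<le> sqrt (c s * Ssum s u)" by (rule real_sqrt_le_mono)
    then show ?thesis by (simp only: Hnorm_S as)
  qed
  have vKfin: "in_Hs s (vK K)" for K
  proof -
    have "vK K j = 0" if "j \<notin> {- 2 * int K .. 2 * int K}" for j
    proof -
      have "PN K h k * PN K w (j - k) = 0" for k
      proof (cases "\<bar>k\<bar> > int K")
        case True then show ?thesis by (simp add: PN_zero)
      next
        case False
        then have "\<bar>j - k\<bar> > int K" using that by auto
        then show ?thesis by (simp add: PN_zero)
      qed
      then have "(\<lambda>k. PN K h k * PN K w (j - k)) = (\<lambda>k. 0)" by auto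
      then show ?thesis unfolding vK_def mult_op_def by simp
    qed
    then show ?thesis using Hs_finite[of "{- 2 * int K .. 2 * int K}" "vK K" s] by auto
  qed
  have vKb: "c s * Ssum s (vK K) \<le> Q" for K
  proof -
    have "Hnorm c s (vK K) \<le> Hnorm c s (PN K h) * Hnorm c s (PN K w)"
      unfolding vK_def using c_alg s PNm h w by blast
    also have "\<dots> \<le> Hnorm c s h * Hnorm c s w"
      by (intro mult_mono Hmono h w Hnorm_nonneg[of c s, OF cs'])
    finally have le: "Hnorm c s (vK K) \<le> Hnorm c s h * Hnorm c s w" .
    have "c s * Ssum s (vK K) = (Hnorm c s (vK K))\<^sup>2"
      unfolding Hnorm_S as using cs Ssum_nonneg[of s "vK K"] by simp
    also have "\<dots> \<le> Q" unfolding Q_def by (rule power_mono[OF le Hnorm_nonneg[of c s, OF cs']])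
    finally show ?thesis .
  qed
  have finb: "c s * (\<Sum>j\<in>F. (norm (v j))\<^sup>2 * sob_weight s j) \<le> Q" if F: "finite F" for F
  proof -
    have tl: "(\<lambda>K. c s * (\<Sum>j\<in>F. (norm (vK K j))\<^sup>2 * sob_weight s j))
              \<longlonglongrightarrow> c s * (\<Sum>j\<in>F. (norm (v j))\<^sup>2 * sob_weight s j)"
      unfolding vK_def v_def by (intro tendsto_intros vK_conv[OF s h w])
    have "c s * (\<Sum>j\<in>F. (norm (vK K j))\<^sup>2 * sob_weight s j) \<le> Q" for K
    proof -
      have "(\<Sum>j\<in>F. (norm (vK K j))\<^sup>2 * sob_weight s j)
            = infsum (\<lambda>j. (norm (vK K j))\<^sup>2 * sob_weight s j) F" using F by simp
      also have "\<dots> \<le> Ssum s (vK K)" unfolding Ssum_def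
        by (rule infsum_mono_neutral) (use F vKfin[of K] in \<open>auto simp: in_Hs_def\<close>)
      finally have "c s * (\<Sum>j\<in>F. (norm (vK K j))\<^sup>2 * sob_weight s j) \<le> c s * Ssum s (vK K)"
        using cs by simp
      then show ?thesis using vKb[of K] by simp
    qed
    then show ?thesis by (intro LIMSEQ_le_const2[OF tl]) auto
  qed
  have bd: "(\<Sum>j\<in>F. (norm (v j))\<^sup>2 * sob_weight s j) \<le> Q / c s" if "finite F" for F
    using finb[OF that] cs by (simp add: field_simps)
  have sv: "in_Hs s v" unfolding in_Hs_def
  proof (rule nonneg_bdd_above_summable_on)
    show "bdd_above (sum (\<lambda>j. (norm (v j))\<^sup>2 * sob_weight s j) ` {F. F \<subseteq> UNIV \<and> finite F})"
      by (rule bdd_aboveI2[where M = "Q / c s"]) (use bd in auto)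
  qed simp
  have "Ssum s v \<le> Q / c s" unfolding Ssum_def
    by (rule infsum_le_finite_sums) (use sv bd in \<open>auto simp: in_Hs_def\<close>)
  then have "c s * Ssum s v \<le> Q" using cs by (simp add: field_simps)
  then show ?thesis using sv unfolding v_def Q_def by simp
qed


lemma AP_summable:
  assumes s: "s > 1/2" and a: "in_Hs s a" and N: "N \<ge> 1"
  shows "(\<lambda>p. a (p * int N + j)) summable_on UNIV"
proof (rule abs_summable_summable)
  have inj: "inj (\<lambda>p::int. p * int N + j)" using N by (auto simp: inj_on_def)
  have "(\<lambda>k. norm (a k)) summable_on range (\<lambda>p::int. p * int N + j)"
    using summable_on_subset[OF Hs_l1[OF s a]] by simp
  then show "(\<lambda>p. norm (a (p * int N + j))) summable_on UNIV"
    using summable_on_reindex[OF inj, of "\<lambda>k. norm (a k)"] by (simp add: o_def)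
qed

theorem lemmal:
  fixes c :: "real \<Rightarrow> real" and s :: real and g :: fcoeff
  assumes c_pos: "\<forall>t\<ge>0. c t > 0"
    and c_alg: "\<forall>t>1/2. \<forall>u v. in_Hs t u \<longrightarrow> in_Hs t v \<longrightarrow>
                   Hnorm c t (mult_op u v) \<le> Hnorm c t u * Hnorm c t v"
    and s_gt: "s > 1/2"
    and g_Hs: "in_Hs s g"
  shows "\<exists>C>0. \<forall>N M :: nat. N \<ge> 1 \<longrightarrow> M \<ge> 1 \<longrightarrow>
           (\<forall>u. in_Hs s u \<longrightarrow>
              Hnorm c s (IN N (mult_op g (Cplus u)) - IN N (mult_op (PN M g) (Cplus u)))
                \<le> C * Hnorm c s (g - PN M g) * Hnorm c s u) \<and>
           (\<forall>u. in_Hs s u \<longrightarrow>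
              Hnorm c s (PN N (mult_op g (Cplus u)) - PN N (mult_op (PN M g) (Cplus u)))
                \<le> C * Hnorm c s (g - PN M g) * Hnorm c s u)"
proof -
  have s0: "s \<ge> 0" using s_gt by simp
  have as: "\<bar>s\<bar> = s" using s_gt by simp
  have cs: "c s > 0" using c_pos s0 by simp
  have cs': "c \<bar>s\<bar> \<ge> 0" using cs as by simp
  define Z where "Z = infsum (\<lambda>j::int. 1 / sob_weight s j) UNIV"
  have Z0: "Z \<ge> 0" unfolding Z_def by (rule infsum_nonneg) simp
  define K0 where "K0 = 2 powr (2 * s) * Z"
  have K00: "K0 \<ge> 0" unfolding K0_def using Z0 by simp
  define C where "C = max 1 (sqrt K0)"
  have C1: "C \<ge> 1" "sqrt K0 \<le> C" unfolding C_def by auto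
  have HS: "Hnorm c s u = sqrt (c s * Ssum s u)" for u by (simp add: Hnorm_S as)
  have main: "Hnorm c s (IN N (mult_op g (Cplus u)) - IN N (mult_op (PN M g) (Cplus u)))
                \<le> C * Hnorm c s (g - PN M g) * Hnorm c s u \<and>
              Hnorm c s (PN N (mult_op g (Cplus u)) - PN N (mult_op (PN M g) (Cplus u)))
                \<le> C * Hnorm c s (g - PN M g) * Hnorm c s u"
    if N: "N \<ge> 1" and u: "in_Hs s u" for N M u
  proof -
    define wu where "wu = Cplus u"
    define h where "h = g - PN M g"
    have wu1: "in_Hs s wu \<and> Ssum s wu \<le> Ssum s u"
      unfolding wu_def by (rule Hs_mono[OF s0 u]) (simp add: Cplus_def)
    have h1: "in_Hs s h"
      using Hs_mono[OF s0 g_Hs, of h] unfolding h_def by (simp add: PN_def)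
    have pg: "in_Hs s (PN M g)"
      using Hs_mono[OF s0 g_Hs, of "PN M g"] by (simp add: PN_def)
    have Hwu: "Hnorm c s wu \<le> Hnorm c s u"
      unfolding HS using wu1 cs by (intro real_sqrt_le_mono mult_left_mono) auto
    define a where "a = mult_op g wu"
    define b where "b = mult_op (PN M g) wu"
    define v where "v = mult_op h wu"
    have aH: "in_Hs s a" unfolding a_def using prod_Hs[OF c_pos c_alg s_gt g_Hs] wu1 by blast
    have bH: "in_Hs s b" unfolding b_def using prod_Hs[OF c_pos c_alg s_gt pg] wu1 by blast
    have vH: "in_Hs s v \<and> c s * Ssum s v \<le> (Hnorm c s h * Hnorm c s wu)\<^sup>2"
      unfolding v_def using prod_Hs[OF c_pos c_alg s_gt h1] wu1 by blast
    have Hh0: "Hnorm c s h \<ge> 0" "Hnorm c s wu \<ge> 0" "Hnorm c s u \<ge> 0"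
      using Hnorm_nonneg[of c s, OF cs'] by auto
    have sv: "sqrt (c s * Ssum s v) \<le> Hnorm c s h * Hnorm c s u"
    proof -
      have "sqrt (c s * Ssum s v) \<le> Hnorm c s h * Hnorm c s wu"
        using vH Hh0 by (simp add: real_sqrt_le_iff real_le_lsqrt)
      also have "\<dots> \<le> Hnorm c s h * Hnorm c s u" by (rule mult_left_mono[OF Hwu Hh0(1)])
      finally show ?thesis .
    qed
    have lin: "a - b = v"
    proof
      fix j
      have "(a - b) j = infsum (\<lambda>k. g k * wu (j - k)) UNIV - infsum (\<lambda>k. PN M g k * wu (j - k)) UNIV"
        unfolding a_def b_def mult_op_def by simp
      also have "\<dots> = infsum (\<lambda>k. g k * wu (j - k) - PN M g k * wu (j - k)) UNIV"
        by (rule infsum_diff'[symmetric]) (use conv_summable[OF s_gt g_Hs] conv_summable[OF s_gt pg] wu1 in auto)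
      also have "\<dots> = v j" unfolding v_def h_def mult_op_def by (simp add: algebra_simps)
      finally show "(a - b) j = v j" .
    qed
    have linI: "IN N a - IN N b = IN N v"
    proof
      fix j
      show "(IN N a - IN N b) j = IN N v j"
      proof (cases "- Nminus N \<le> j \<and> j \<le> Nplus N")
        case True
        have "(IN N a - IN N b) j = infsum (\<lambda>p. a (p * int N + j)) UNIV - infsum (\<lambda>p. b (p * int N + j)) UNIV"
          using True unfolding IN_def by simp
        also have "\<dots> = infsum (\<lambda>p. a (p * int N + j) - b (p * int N + j)) UNIV"
          by (rule infsum_diff'[symmetric]) (use AP_summable[OF s_gt aH N] AP_summable[OF s_gt bH N] in auto)
        also have "\<dots> = IN N v j" using True unfolding IN_def lin[symmetric] by simp
        finally show ?thesis .
      next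
        case False then show ?thesis unfolding IN_def fun_diff_def by auto
      qed
    qed
    have linP: "PN N a - PN N b = PN N v" unfolding lin[symmetric] by (auto simp: PN_def)
    have r1: "Hnorm c s (IN N v) \<le> C * Hnorm c s h * Hnorm c s u"
    proof -
      have "c s * Ssum s (IN N v) \<le> c s * (K0 * Ssum s v)"
        using IN_bound[OF s_gt N conjunct1[OF vH]] cs unfolding K0_def Z_def
        by (intro mult_left_mono) auto
      then have "Hnorm c s (IN N v) \<le> sqrt (K0 * (c s * Ssum s v))" unfolding HS
        by (intro real_sqrt_le_mono) (simp add: algebra_simps)
      also have "\<dots> = sqrt K0 * sqrt (c s * Ssum s v)" by (simp add: real_sqrt_mult)
      also have "\<dots> \<le> C * (Hnorm c s h * Hnorm c s u)"
        by (rule mult_mono[OF C1(2) sv]) (use C1 cs Ssum_nonneg[of s v] in auto)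
      finally show ?thesis by (simp add: mult.assoc)
    qed
    have r2: "Hnorm c s (PN N v) \<le> C * Hnorm c s h * Hnorm c s u"
    proof -
      have "Ssum s (PN N v) \<le> Ssum s v"
        using Hs_mono[OF s0 conjunct1[OF vH], of "PN N v"] by (simp add: PN_def)
      then have "Hnorm c s (PN N v) \<le> sqrt (c s * Ssum s v)" unfolding HS
        using cs by (intro real_sqrt_le_mono mult_left_mono) auto
      also have "\<dots> \<le> Hnorm c s h * Hnorm c s u" by (rule sv)
      also have "\<dots> \<le> C * (Hnorm c s h * Hnorm c s u)"
      proof -
        have gen: "x \<le> C * x" if "0 \<le> x" for x :: real
          using C1(1) that by (simp add: mult_le_cancel_right1)
        show ?thesis by (rule gen) (use Hh0 in simp)
      qed
      finally show ?thesis by (simp add: mult.assoc)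
    qed
    show ?thesis using r1 r2 linI linP unfolding a_def b_def v_def wu_def h_def by simp
  qed
  have "C > 0" using C1 by simp
  then show ?thesis using main by blast
qed

end
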